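(* Let $(G,\omega_1)$ and $(H,\omega_2)$ be weighted locally compact groups, $1\le p<\infty$, with $L^p(G,\omega_1)$ and $L^p(H,\omega_2)$ convolution Banach algebras. Let $T:L^p(G,\omega_1)\to L^p(H,\omega_2)$ be an algebra isomorphism such that either $T$ is bipositive, or $T$ is an isometry and $p\neq 2$. Then $T$ is bicontinuous and biseparating.
   Context: A weighted locally compact group is a pair $(G,\omega)$ with $G$ locally compact and $\omega:G\to\mathbb{R}^+$ positive continuous, $\omega(xy)\le\omega(x)\omega(y)$, $\omega(e_G)=1$. $L^p(G,\omega)$ is the space of measurable $f$ with $\|f\|_{p,\omega}=\left(\int_G|f|^p\omega^p\,d\lambda\right)^{1/p}<\infty$. $f$ is positive if $f\ge0$ a.e.; $T$ is positive if $Tf\ge 0$ whenever $f\ge0$; bipositive if $T$ is a bijection with $T$ and $T^{-1}$ positive. $T$ is disjointness preserving if $f\cdot g=0$ implies $Tf\cdot Tg=0$; biseparating if it is a bijection and $T,T^{-1}$ are disjointness preserving; bicontinuous if $T,T^{-1}$ are bounded. *)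

theory Defs
  imports "HOL-Analysis.Analysis"
begin

definition lc_group ::
  "('g::t2_space \<Rightarrow> 'g \<Rightarrow> 'g) \<Rightarrow> 'g \<Rightarrow> ('g \<Rightarrow> 'g) \<Rightarrow> 'g measure \<Rightarrow> bool" where
  "lc_group gm e gi mu \<longleftrightarrow>
     (\<forall>x y z. gm (gm x y) z = gm x (gm y z)) \<and>
     (\<forall>x. gm e x = x \<and> gm x e = x) \<and>
     (\<forall>x. gm (gi x) x = e \<and> gm x (gi x) = e) \<and>
     continuous_on UNIV (\<lambda>(x, y). gm x y) \<and>
     continuous_on UNIV gi \<and>
     locally compact (UNIV :: 'g set) \<and>
     space mu = UNIV \<and> sets mu = sets borel \<and>
     (\<forall>x. \<forall>A\<in>sets borel. emeasure mu ((\<lambda>y. gm x y) ` A) = emeasure mu A) \<and>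
     (\<forall>K. compact K \<longrightarrow> emeasure mu K < \<infinity>) \<and>
     (\<forall>A\<in>sets borel. emeasure mu A = (INF U\<in>{U. open U \<and> A \<subseteq> U}. emeasure mu U)) \<and>
     (\<forall>U. open U \<longrightarrow> emeasure mu U = (SUP K\<in>{K. compact K \<and> K \<subseteq> U}. emeasure mu K)) \<and>
     emeasure mu UNIV \<noteq> 0"

definition weight :: "('g::topological_space \<Rightarrow> 'g \<Rightarrow> 'g) \<Rightarrow> 'g \<Rightarrow> ('g \<Rightarrow> real) \<Rightarrow> bool" where
  "weight gm e w \<longleftrightarrow> (\<forall>x. w x > 0) \<and> continuous_on UNIV w \<and>
     (\<forall>x y. w (gm x y) \<le> w x * w y) \<and> w e = 1"

definition weighted_lc_group ::
  "('g::t2_space \<Rightarrow> 'g \<Rightarrow> 'g) \<Rightarrow> 'g \<Rightarrow> ('g \<Rightarrow> 'g) \<Rightarrow> 'g measure \<Rightarrow> ('g \<Rightarrow> real) \<Rightarrow> bool" where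
  "weighted_lc_group gm e gi mu w \<longleftrightarrow> lc_group gm e gi mu \<and> weight gm e w"

section \<open>Weighted L^p spaces (complex-valued; elements are representatives)\<close>

definition lp_integral :: "'g measure \<Rightarrow> ('g \<Rightarrow> real) \<Rightarrow> real \<Rightarrow> ('g \<Rightarrow> complex) \<Rightarrow> ennreal" where
  "lp_integral mu w p f = (\<integral>\<^sup>+ x. ennreal ((cmod (f x) * w x) powr p) \<partial>mu)"

definition Lp_w :: "'g measure \<Rightarrow> ('g \<Rightarrow> real) \<Rightarrow> real \<Rightarrow> ('g \<Rightarrow> complex) set" where
  "Lp_w mu w p = {f. f \<in> borel_measurable mu \<and> lp_integral mu w p f < \<infinity>}"

definition lp_norm :: "'g measure \<Rightarrow> ('g \<Rightarrow> real) \<Rightarrow> real \<Rightarrow> ('g \<Rightarrow> complex) \<Rightarrow> real" where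
  "lp_norm mu w p f = (enn2real (lp_integral mu w p f)) powr (1 / p)"

definition conv_defined ::
  "('g \<Rightarrow> 'g \<Rightarrow> 'g) \<Rightarrow> ('g \<Rightarrow> 'g) \<Rightarrow> 'g measure \<Rightarrow> ('g \<Rightarrow> complex) \<Rightarrow> ('g \<Rightarrow> complex) \<Rightarrow> bool" where
  "conv_defined gm gi mu f g \<longleftrightarrow>
     (AE x in mu. integrable mu (\<lambda>y. f y * g (gm (gi y) x)))"

definition conv ::
  "('g \<Rightarrow> 'g \<Rightarrow> 'g) \<Rightarrow> ('g \<Rightarrow> 'g) \<Rightarrow> 'g measure \<Rightarrow> ('g \<Rightarrow> complex) \<Rightarrow> ('g \<Rightarrow> complex) \<Rightarrow> 'g \<Rightarrow> complex" where
  "conv gm gi mu f g = (\<lambda>x. LINT y|mu. f y * g (gm (gi y) x))"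

definition conv_banach_algebra ::
  "('g \<Rightarrow> 'g \<Rightarrow> 'g) \<Rightarrow> ('g \<Rightarrow> 'g) \<Rightarrow> 'g measure \<Rightarrow> ('g \<Rightarrow> real) \<Rightarrow> real \<Rightarrow> bool" where
  "conv_banach_algebra gm gi mu w p \<longleftrightarrow>
     (\<forall>f\<in>Lp_w mu w p. \<forall>g\<in>Lp_w mu w p.
        conv_defined gm gi mu f g \<and> conv gm gi mu f g \<in> Lp_w mu w p) \<and>
     (\<exists>C. \<forall>f\<in>Lp_w mu w p. \<forall>g\<in>Lp_w mu w p.
        lp_norm mu w p (conv gm gi mu f g) \<le> C * lp_norm mu w p f * lp_norm mu w p g)"

section \<open>Operators between L^p spaces, acting on representatives modulo a.e. equality\<close>

definition ae_eq :: "'g measure \<Rightarrow> ('g \<Rightarrow> complex) \<Rightarrow> ('g \<Rightarrow> complex) \<Rightarrow> bool" where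
  "ae_eq mu f g \<longleftrightarrow> (AE x in mu. f x = g x)"

definition nonneg_ae :: "'g measure \<Rightarrow> ('g \<Rightarrow> complex) \<Rightarrow> bool" where
  "nonneg_ae mu f \<longleftrightarrow> (AE x in mu. Im (f x) = 0 \<and> Re (f x) \<ge> 0)"

definition disjoint_ae :: "'g measure \<Rightarrow> ('g \<Rightarrow> complex) \<Rightarrow> ('g \<Rightarrow> complex) \<Rightarrow> bool" where
  "disjoint_ae mu f g \<longleftrightarrow> (AE x in mu. f x * g x = 0)"

definition algebra_iso ::
  "('g \<Rightarrow> 'g \<Rightarrow> 'g) \<Rightarrow> ('g \<Rightarrow> 'g) \<Rightarrow> 'g measure \<Rightarrow> ('g \<Rightarrow> real) \<Rightarrow>
   ('h \<Rightarrow> 'h \<Rightarrow> 'h) \<Rightarrow> ('h \<Rightarrow> 'h) \<Rightarrow> 'h measure \<Rightarrow> ('h \<Rightarrow> real) \<Rightarrow> real \<Rightarrow>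
   (('g \<Rightarrow> complex) \<Rightarrow> ('h \<Rightarrow> complex)) \<Rightarrow> bool" where
  "algebra_iso multG invG muG w1 multH invH muH w2 p T \<longleftrightarrow>
     (\<forall>f\<in>Lp_w muG w1 p. T f \<in> Lp_w muH w2 p) \<and>
     (\<forall>f\<in>Lp_w muG w1 p. \<forall>g\<in>Lp_w muG w1 p. ae_eq muG f g \<longrightarrow> ae_eq muH (T f) (T g)) \<and>
     (\<forall>f\<in>Lp_w muG w1 p. \<forall>g\<in>Lp_w muG w1 p. \<forall>a b::complex.
        ae_eq muH (T (\<lambda>x. a * f x + b * g x)) (\<lambda>y. a * T f y + b * T g y)) \<and>
     (\<forall>f\<in>Lp_w muG w1 p. \<forall>g\<in>Lp_w muG w1 p.
        ae_eq muH (T (conv multG invG muG f g)) (conv multH invH muH (T f) (T g))) \<and>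
     (\<forall>f\<in>Lp_w muG w1 p. \<forall>g\<in>Lp_w muG w1 p. ae_eq muH (T f) (T g) \<longrightarrow> ae_eq muG f g) \<and>
     (\<forall>h\<in>Lp_w muH w2 p. \<exists>f\<in>Lp_w muG w1 p. ae_eq muH (T f) h)"

definition bipositive ::
  "'g measure \<Rightarrow> ('g \<Rightarrow> real) \<Rightarrow> 'h measure \<Rightarrow> ('h \<Rightarrow> real) \<Rightarrow> real \<Rightarrow>
   (('g \<Rightarrow> complex) \<Rightarrow> ('h \<Rightarrow> complex)) \<Rightarrow> bool" where
  "bipositive muG w1 muH w2 p T \<longleftrightarrow>
     (\<forall>f\<in>Lp_w muG w1 p. nonneg_ae muG f \<longrightarrow> nonneg_ae muH (T f)) \<and>
     (\<forall>f\<in>Lp_w muG w1 p. nonneg_ae muH (T f) \<longrightarrow> nonneg_ae muG f)"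

definition isometry_lp ::
  "'g measure \<Rightarrow> ('g \<Rightarrow> real) \<Rightarrow> 'h measure \<Rightarrow> ('h \<Rightarrow> real) \<Rightarrow> real \<Rightarrow>
   (('g \<Rightarrow> complex) \<Rightarrow> ('h \<Rightarrow> complex)) \<Rightarrow> bool" where
  "isometry_lp muG w1 muH w2 p T \<longleftrightarrow>
     (\<forall>f\<in>Lp_w muG w1 p. lp_norm muH w2 p (T f) = lp_norm muG w1 p f)"

definition bicontinuous ::
  "'g measure \<Rightarrow> ('g \<Rightarrow> real) \<Rightarrow> 'h measure \<Rightarrow> ('h \<Rightarrow> real) \<Rightarrow> real \<Rightarrow>
   (('g \<Rightarrow> complex) \<Rightarrow> ('h \<Rightarrow> complex)) \<Rightarrow> bool" where
  "bicontinuous muG w1 muH w2 p T \<longleftrightarrow>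
     (\<exists>C. \<forall>f\<in>Lp_w muG w1 p. lp_norm muH w2 p (T f) \<le> C * lp_norm muG w1 p f) \<and>
     (\<exists>C. \<forall>f\<in>Lp_w muG w1 p. lp_norm muG w1 p f \<le> C * lp_norm muH w2 p (T f))"

definition biseparating ::
  "'g measure \<Rightarrow> ('g \<Rightarrow> real) \<Rightarrow> 'h measure \<Rightarrow> ('h \<Rightarrow> real) \<Rightarrow> real \<Rightarrow>
   (('g \<Rightarrow> complex) \<Rightarrow> ('h \<Rightarrow> complex)) \<Rightarrow> bool" where
  "biseparating muG w1 muH w2 p T \<longleftrightarrow>
     (\<forall>f\<in>Lp_w muG w1 p. \<forall>g\<in>Lp_w muG w1 p.
        disjoint_ae muG f g \<longrightarrow> disjoint_ae muH (T f) (T g)) \<and>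
     (\<forall>f\<in>Lp_w muG w1 p. \<forall>g\<in>Lp_w muG w1 p.
        disjoint_ae muH (T f) (T g) \<longrightarrow> disjoint_ae muG f g)"

end

theory Submission
  imports Defs "HOL-Analysis.Analysis"
begin



lemma powr_concave:
  assumes q: "0 \<le> q" "q \<le> 1" shows "concave_on {0<..} (\<lambda>x. x powr q)"
proof (rule f''_le0_imp_concave[where f' = "\<lambda>x. q * x powr (q - 1)" and f'' = "\<lambda>x. q * ((q - 1) * x powr (q - 1 - 1))"])
  show "convex {0::real<..}" by simp
  fix x :: real assume x: "x \<in> {0<..}"
  show "((\<lambda>x. x powr q) has_real_derivative q * x powr (q - 1)) (at x)"
    using x by (intro has_real_derivative_powr) auto
  show "((\<lambda>x. q * x powr (q - 1)) has_real_derivative q * ((q - 1) * x powr (q - 1 - 1))) (at x)"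
    using x by (intro DERIV_cmult has_real_derivative_powr) auto
  show "q * ((q - 1) * x powr (q - 1 - 1)) \<le> 0"
    using q x by (intro mult_nonneg_nonpos mult_nonpos_nonneg) auto
qed

lemma paral: "cmod (a+b)^2 + cmod (a-b)^2 = 2*(cmod a^2 + cmod b^2)"
  unfolding cmod_power2 by (simp add: power2_eq_square algebra_simps)

lemma powr_sq: "(x::real) \<ge> 0 \<Longrightarrow> x powr p = (x^2) powr (p/2)"
proof (cases "x = 0")
  case False
  assume "x \<ge> 0"
  then have "x > 0" using False by simp
  then have "x^2 = x powr 2" by (simp add: powr_realpow)
  then have "(x^2) powr (p/2) = (x powr 2) powr (p/2)" by simp
  also have "\<dots> = x powr p" by (simp add: powr_powr)
  finally show ?thesis by simp
qed simp

lemma mid_convex: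
  fixes x y q :: real
  assumes "x \<ge> 0" "y \<ge> 0" "q \<ge> 1"
  shows "2 * ((x+y)/2) powr q \<le> x powr q + y powr q"
proof -
  have h2: "2 \<le> (2::real) powr q" using assms(3) powr_mono[of 1 q 2] by simp
  have edge: "2 * (z/2) powr q \<le> z powr q" if "z \<ge> 0" for z :: real
  proof -
    have e: "2 * (z/2) powr q = 2 * z powr q / 2 powr q" using that by (simp add: powr_divide)
    have "z powr q * 2 \<le> z powr q * 2 powr q" by (rule mult_left_mono[OF h2]) simp
    then have "2 * z powr q / 2 powr q \<le> z powr q" by (simp add: pos_divide_le_eq mult.commute)
    then show ?thesis using e by simp
  qed
  show ?thesis
  proof (cases "x = 0 \<or> y = 0")
    case True then show ?thesis using edge assms by auto
  next
    case False
    then have "x > 0" "y > 0" using assms by auto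
    from convex_onD[OF powr_convex[OF assms(3)], of "1/2" x y] this
    show ?thesis by (simp add: field_simps)
  qed
qed

lemma mid_concave:
  fixes x y q :: real
  assumes "x \<ge> 0" "y \<ge> 0" "0 \<le> q" "q \<le> 1"
  shows "x powr q + y powr q \<le> 2 * ((x+y)/2) powr q"
proof -
  have h2: "(2::real) powr q \<le> 2" using assms powr_mono[of q 1 2] by simp
  have edge: "z powr q \<le> 2 * (z/2) powr q" if "z \<ge> 0" for z :: real
  proof -
    have e: "2 * (z/2) powr q = 2 * z powr q / 2 powr q" using that by (simp add: powr_divide)
    have "z powr q * 2 powr q \<le> z powr q * 2" by (rule mult_left_mono[OF h2]) simp
    then have "z powr q \<le> 2 * z powr q / 2 powr q" by (simp add: pos_le_divide_eq mult.commute)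
    then show ?thesis using e by simp
  qed
  show ?thesis
  proof (cases "x = 0 \<or> y = 0")
    case True then show ?thesis using edge assms by auto
  next
    case False
    then have "x > 0" "y > 0" using assms by auto
    from concave_onD[OF powr_concave[OF assms(3,4)], of "1/2" x y] this
    show ?thesis by (simp add: field_simps)
  qed
qed

lemma superadd:
  fixes s t q :: real
  assumes "s > 0" "t > 0" "q > 1"
  shows "s powr q + t powr q < (s+t) powr q"
proof -
  have "s powr (q-1) < (s+t) powr (q-1)" "t powr (q-1) < (s+t) powr (q-1)"
    using assms by (auto intro: powr_less_mono2)
  then have "s * s powr (q-1) + t * t powr (q-1) < s * (s+t) powr (q-1) + t * (s+t) powr (q-1)"
    using assms by (intro add_strict_mono mult_strict_left_mono) auto
  also have "\<dots> = (s+t) * (s+t) powr (q-1)" by (simp add: algebra_simps)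
  finally show ?thesis using assms by (simp add: powr_mult_base)
qed

lemma subadd:
  fixes s t q :: real
  assumes "s > 0" "t > 0" "0 < q" "q < 1"
  shows "(s+t) powr q < s powr q + t powr q"
proof -
  have "(s+t) powr (q-1) < s powr (q-1)" "(s+t) powr (q-1) < t powr (q-1)"
    using assms by (auto intro: powr_less_mono2_neg)
  then have "s * (s+t) powr (q-1) + t * (s+t) powr (q-1) < s * s powr (q-1) + t * t powr (q-1)"
    using assms by (intro add_strict_mono mult_strict_left_mono) auto
  moreover have "s * (s+t) powr (q-1) + t * (s+t) powr (q-1) = (s+t) * (s+t) powr (q-1)" by (simp add: algebra_simps)
  ultimately show ?thesis using assms by (simp add: powr_mult_base)
qed

lemma lamperti_pt:
  fixes a b :: complex and p :: real
  assumes p: "p > 0"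
  shows "(p \<ge> 2 \<longrightarrow> 2*(cmod a powr p + cmod b powr p) \<le> cmod (a+b) powr p + cmod (a-b) powr p)
       \<and> (p \<le> 2 \<longrightarrow> cmod (a+b) powr p + cmod (a-b) powr p \<le> 2*(cmod a powr p + cmod b powr p))
       \<and> (p \<noteq> 2 \<longrightarrow> cmod (a+b) powr p + cmod (a-b) powr p = 2*(cmod a powr p + cmod b powr p) \<longrightarrow> a*b = 0)"
proof -
  define q where "q = p/2"
  define x where "x = cmod (a+b)^2"
  define y where "y = cmod (a-b)^2"
  define s where "s = cmod a^2"
  define t where "t = cmod b^2"
  have nn: "x \<ge> 0" "y \<ge> 0" "s \<ge> 0" "t \<ge> 0" by (auto simp: x_def y_def s_def t_def)
  have xy: "(x+y)/2 = s+t" unfolding x_def y_def s_def t_def using paral[of a b] by simp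
  have eqs: "cmod (a+b) powr p = x powr q" "cmod (a-b) powr p = y powr q"
    "cmod a powr p = s powr q" "cmod b powr p = t powr q"
    unfolding x_def y_def s_def t_def q_def by (auto intro: powr_sq)
  have q0: "q > 0" using p by (simp add: q_def)
  have sup_le: "s powr q + t powr q \<le> (s+t) powr q" if "q \<ge> 1"
  proof (cases "s = 0 \<or> t = 0")
    case True then show ?thesis using nn by auto
  next
    case False
    then have "s > 0" "t > 0" using nn by auto
    then show ?thesis using superadd[of s t q] that by (cases "q = 1") auto
  qed
  have sub_le: "(s+t) powr q \<le> s powr q + t powr q" if "q \<le> 1"
  proof (cases "s = 0 \<or> t = 0")
    case True then show ?thesis using nn by auto
  next
    case False
    then have "s > 0" "t > 0" using nn by auto
    then show ?thesis using subadd[of s t q] that q0 by (cases "q = 1") auto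
  qed
  have A: "2*(s powr q + t powr q) \<le> x powr q + y powr q" if "p \<ge> 2"
  proof -
    have q1: "q \<ge> 1" using that by (simp add: q_def)
    have "2*(s+t) powr q \<le> x powr q + y powr q" using mid_convex[of x y q, unfolded xy] nn q1 by simp
    then show ?thesis using sup_le[OF q1] by simp
  qed
  have B: "x powr q + y powr q \<le> 2*(s powr q + t powr q)" if "p \<le> 2"
  proof -
    have q1: "q \<le> 1" using that by (simp add: q_def)
    have "x powr q + y powr q \<le> 2*(s+t) powr q" using mid_concave[of x y q, unfolded xy] nn q1 q0 by simp
    then show ?thesis using sub_le[OF q1] by simp
  qed
  have C: "a * b = 0" if "p \<noteq> 2" "x powr q + y powr q = 2*(s powr q + t powr q)"
  proof (rule ccontr)
    assume "a * b \<noteq> 0"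
    then have "s > 0" "t > 0" by (auto simp: s_def t_def)
    show False
    proof (cases "p > 2")
      case True
      then have q1: "q > 1" by (simp add: q_def)
      have "2*(s+t) powr q \<le> x powr q + y powr q" using mid_convex[of x y q, unfolded xy] nn q1 by simp
      then show False using superadd[OF \<open>s>0\<close> \<open>t>0\<close> q1] that(2) by simp
    next
      case False
      then have q1: "q < 1" using that by (simp add: q_def)
      have "x powr q + y powr q \<le> 2*(s+t) powr q" using mid_concave[of x y q, unfolded xy] nn q1 q0 by simp
      then show False using subadd[OF \<open>s>0\<close> \<open>t>0\<close> q0 q1] that(2) by simp
    qed
  qed
  show ?thesis unfolding eqs using A B C by auto
qed




locale wlp =
  fixes M :: "'a measure" and w :: "'a \<Rightarrow> real" and p :: real
  assumes w_pos: "\<And>x. w x > 0" and w_meas[measurable]: "w \<in> borel_measurable M"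
    and p1: "1 \<le> p"
begin

declare w_meas[measurable]

lemma integrand_meas[measurable]:
  assumes "f \<in> borel_measurable M"
  shows "(\<lambda>x. (cmod (f x) * w x) powr p) \<in> borel_measurable M"
proof -
  note [measurable] = assms w_meas
  show ?thesis by measurable
qed

lemma I_cong: "AE x in M. f x = g x \<Longrightarrow> lp_integral M w p f = lp_integral M w p g"
  unfolding lp_integral_def by (rule nn_integral_cong_AE) auto

lemma I_mono: "AE x in M. cmod (f x) \<le> cmod (g x) \<Longrightarrow> lp_integral M w p f \<le> lp_integral M w p g"
  unfolding lp_integral_def
proof (rule nn_integral_mono_AE, erule eventually_mono)
  fix x assume "cmod (f x) \<le> cmod (g x)"
  then have "cmod (f x) * w x \<le> cmod (g x) * w x" using w_pos[of x] by (simp add: mult_right_mono)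
  then have "(cmod (f x) * w x) powr p \<le> (cmod (g x) * w x) powr p"
    using p1 w_pos[of x] by (intro powr_mono2) auto
  then show "ennreal ((cmod (f x) * w x) powr p) \<le> ennreal ((cmod (g x) * w x) powr p)"
    by (rule ennreal_leI)
qed

lemma I_cmult: "f \<in> borel_measurable M \<Longrightarrow>
   lp_integral M w p (\<lambda>x. c * f x) = ennreal (cmod c powr p) * lp_integral M w p f"
  unfolding lp_integral_def
  apply (subst nn_integral_cmult[symmetric])
   apply (simp add: integrand_meas)
  apply (rule nn_integral_cong)
  using w_pos by (simp add: norm_mult powr_mult ennreal_mult' mult.assoc)

lemma Lp_meas: "f \<in> Lp_w M w p \<Longrightarrow> f \<in> borel_measurable M"
  by (simp add: Lp_w_def)

lemma Lp_fin: "f \<in> Lp_w M w p \<Longrightarrow> lp_integral M w p f < \<infinity>"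
  by (simp add: Lp_w_def)

lemma Lp_dom: "g \<in> borel_measurable M \<Longrightarrow> f \<in> Lp_w M w p \<Longrightarrow> AE x in M. cmod (g x) \<le> cmod (f x)
   \<Longrightarrow> g \<in> Lp_w M w p"
  using I_mono[of g f] by (auto simp: Lp_w_def)

lemma Lp_cong: "g \<in> borel_measurable M \<Longrightarrow> f \<in> Lp_w M w p \<Longrightarrow> AE x in M. g x = f x
   \<Longrightarrow> g \<in> Lp_w M w p"
  by (erule Lp_dom, assumption, auto elim: eventually_mono)

lemma Lp_lin:
  assumes f: "f \<in> Lp_w M w p" and g: "g \<in> Lp_w M w p"
  shows "(\<lambda>x. a * f x + b * g x) \<in> Lp_w M w p"
proof -
  have mf[measurable]: "f \<in> borel_measurable M" and mg[measurable]: "g \<in> borel_measurable M"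
    using f g by (auto simp: Lp_w_def)
  have pt: "(cmod (a * f x + b * g x) * w x) powr p \<le>
      2 powr p * ((cmod (a * f x) * w x) powr p + (cmod (b * g x) * w x) powr p)" for x
  proof -
    define A where "A = cmod (a * f x) * w x"
    define B where "B = cmod (b * g x) * w x"
    have A0: "A \<ge> 0" and B0: "B \<ge> 0" using w_pos[of x] by (auto simp: A_def B_def)
    have "cmod (a * f x + b * g x) * w x \<le> A + B"
      using w_pos[of x] norm_triangle_ineq[of "a * f x" "b * g x"] mult_right_mono[of "cmod (a * f x + b * g x)" "cmod (a * f x) + cmod (b * g x)" "w x"]
      by (auto simp: A_def B_def algebra_simps)
    also have "\<dots> \<le> 2 * max A B" by simp
    finally have "(cmod (a * f x + b * g x) * w x) powr p \<le> (2 * max A B) powr p"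
      using p1 w_pos[of x] by (intro powr_mono2) auto
    also have "\<dots> = 2 powr p * max A B powr p" using A0 B0 by (simp add: powr_mult)
    also have "\<dots> \<le> 2 powr p * (A powr p + B powr p)"
      using A0 B0 by (intro mult_left_mono) (auto simp: max_def)
    finally show ?thesis by (simp add: A_def B_def)
  qed
  have maf: "(\<lambda>x. a * f x) \<in> borel_measurable M" and mbg: "(\<lambda>x. b * g x) \<in> borel_measurable M"
    by measurable
  have mX: "(\<lambda>x. ennreal ((cmod (a * f x) * w x) powr p)) \<in> borel_measurable M"
    using integrand_meas[OF maf] by measurable
  have mY: "(\<lambda>x. ennreal ((cmod (b * g x) * w x) powr p)) \<in> borel_measurable M"
    using integrand_meas[OF mbg] by measurable
  have "lp_integral M w p (\<lambda>x. a * f x + b * g x) \<le>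
     (\<integral>\<^sup>+ x. ennreal (2 powr p * ((cmod (a * f x) * w x) powr p + (cmod (b * g x) * w x) powr p)) \<partial>M)"
    unfolding lp_integral_def by (rule nn_integral_mono) (rule ennreal_leI[OF pt])
  also have "\<dots> = (\<integral>\<^sup>+ x. ennreal (2 powr p) * (ennreal ((cmod (a * f x) * w x) powr p) + ennreal ((cmod (b * g x) * w x) powr p)) \<partial>M)"
    by (rule nn_integral_cong) (simp add: ennreal_mult ennreal_plus)
  also have "\<dots> = ennreal (2 powr p) * (lp_integral M w p (\<lambda>x. a * f x) + lp_integral M w p (\<lambda>x. b * g x))"
    unfolding lp_integral_def
    by (subst nn_integral_cmult) (auto intro: borel_measurable_add mX mY simp: nn_integral_add[OF mX mY])
  also have "\<dots> < \<infinity>"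
  proof -
    have "lp_integral M w p (\<lambda>x. a * f x) < \<infinity>" "lp_integral M w p (\<lambda>x. b * g x) < \<infinity>"
      using I_cmult[OF mf, of a] I_cmult[OF mg, of b] Lp_fin[OF f] Lp_fin[OF g]
      by (simp_all add: ennreal_mult_less_top)
    then show ?thesis by (simp add: ennreal_mult_less_top)
  qed
  finally show ?thesis using mf mg unfolding Lp_w_def by simp
qed

definition J where "J f = enn2real (lp_integral M w p f)"

lemma I_J: "f \<in> Lp_w M w p \<Longrightarrow> lp_integral M w p f = ennreal (J f)"
  unfolding J_def using Lp_fin[of f] by (simp add: less_top)

lemma J_nonneg: "J f \<ge> 0" by (simp add: J_def)

lemma norm_J: "lp_norm M w p f = J f powr (1/p)"
  by (simp add: lp_norm_def J_def)

end




context wlp begin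

lemma I_alt: "lp_integral M w p f = (\<integral>\<^sup>+ x. ennreal (cmod (f x) powr p * w x powr p) \<partial>M)"
  unfolding lp_integral_def
proof (rule nn_integral_cong)
  fix x
  have "(cmod (f x) * w x) powr p = cmod (f x) powr p * w x powr p"
    using w_pos[of x] by (simp add: powr_mult)
  then show "ennreal ((cmod (f x) * w x) powr p) = ennreal (cmod (f x) powr p * w x powr p)" by simp
qed

lemma ae_le_eq:
  fixes F G :: "'a \<Rightarrow> real"
  assumes mF: "F \<in> borel_measurable M" and mG: "G \<in> borel_measurable M"
    and le: "\<And>x. 0 \<le> G x" "\<And>x. G x \<le> F x"
    and eq: "(\<integral>\<^sup>+ x. ennreal (F x) \<partial>M) = (\<integral>\<^sup>+ x. ennreal (G x) \<partial>M)"
    and fin: "(\<integral>\<^sup>+ x. ennreal (G x) \<partial>M) < \<infinity>"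
  shows "AE x in M. F x = G x"
proof -
  have mD: "(\<lambda>x. ennreal (F x - G x)) \<in> borel_measurable M" using mF mG by measurable
  have mG': "(\<lambda>x. ennreal (G x)) \<in> borel_measurable M" using mG by measurable
  have pt: "ennreal (F x) = ennreal (G x) + ennreal (F x - G x)" for x
  proof -
    have "ennreal (G x) + ennreal (F x - G x) = ennreal (G x + (F x - G x))"
      using le[of x] by (intro ennreal_plus[symmetric]) auto
    then show ?thesis by simp
  qed
  have "(\<integral>\<^sup>+ x. ennreal (F x) \<partial>M) = (\<integral>\<^sup>+ x. ennreal (G x) + ennreal (F x - G x) \<partial>M)"
    by (rule nn_integral_cong) (rule pt)
  also have "\<dots> = (\<integral>\<^sup>+ x. ennreal (G x) \<partial>M) + (\<integral>\<^sup>+ x. ennreal (F x - G x) \<partial>M)"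
    by (rule nn_integral_add[OF mG' mD])
  finally have "(\<integral>\<^sup>+ x. ennreal (G x) \<partial>M) + (\<integral>\<^sup>+ x. ennreal (F x - G x) \<partial>M) = (\<integral>\<^sup>+ x. ennreal (G x) \<partial>M) + 0"
    using eq by simp
  then have "(\<integral>\<^sup>+ x. ennreal (F x - G x) \<partial>M) = 0"
    using fin by (subst (asm) ennreal_add_left_cancel) auto
  then have "AE x in M. ennreal (F x - G x) = 0"
    using nn_integral_0_iff_AE[OF mD] by simp
  then show ?thesis
  proof (rule eventually_mono)
    fix x assume "ennreal (F x - G x) = 0"
    then have "F x - G x \<le> 0" using ennreal_eq_0_iff by blast
    then show "F x = G x" using le[of x] by simp
  qed
qed

end




lemma nn_int_add_real:
  fixes A B :: "'a \<Rightarrow> real"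
  assumes "A \<in> borel_measurable M" "B \<in> borel_measurable M" "\<And>x. A x \<ge> 0" "\<And>x. B x \<ge> 0"
  shows "(\<integral>\<^sup>+x. ennreal (A x + B x) \<partial>M) = (\<integral>\<^sup>+x. ennreal (A x) \<partial>M) + (\<integral>\<^sup>+x. ennreal (B x) \<partial>M)"
proof -
  have "(\<integral>\<^sup>+x. ennreal (A x + B x) \<partial>M) = (\<integral>\<^sup>+x. ennreal (A x) + ennreal (B x) \<partial>M)"
    using assms(3,4) by (intro nn_integral_cong ennreal_plus) auto
  also have "\<dots> = (\<integral>\<^sup>+x. ennreal (A x) \<partial>M) + (\<integral>\<^sup>+x. ennreal (B x) \<partial>M)"
    using assms(1,2) by (intro nn_integral_add) auto
  finally show ?thesis .
qed

lemma nn_int_2_real: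
  fixes A :: "'a \<Rightarrow> real"
  assumes "A \<in> borel_measurable M" "\<And>x. A x \<ge> 0"
  shows "(\<integral>\<^sup>+x. ennreal (2 * A x) \<partial>M) = 2 * (\<integral>\<^sup>+x. ennreal (A x) \<partial>M)"
proof -
  have "(\<integral>\<^sup>+x. ennreal (2 * A x) \<partial>M) = (\<integral>\<^sup>+x. 2 * ennreal (A x) \<partial>M)"
    using assms(2) by (intro nn_integral_cong) (simp add: ennreal_mult)
  also have "\<dots> = 2 * (\<integral>\<^sup>+x. ennreal (A x) \<partial>M)"
    using assms(1) by (intro nn_integral_cmult) auto
  finally show ?thesis .
qed

context wlp begin

lemma meas_cw: assumes "u \<in> borel_measurable M"
  shows "(\<lambda>x. cmod (u x) powr p * w x powr p) \<in> borel_measurable M"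
proof -
  note [measurable] = assms w_meas
  show ?thesis by measurable
qed

lemma meas_cw2: assumes "u \<in> borel_measurable M" "v \<in> borel_measurable M"
  shows "(\<lambda>x. cmod (u x + v x) powr p * w x powr p) \<in> borel_measurable M \<and>
   (\<lambda>x. cmod (u x - v x) powr p * w x powr p) \<in> borel_measurable M"
proof -
  note [measurable] = assms w_meas
  show ?thesis by measurable
qed

lemma int_split:
  assumes mu: "u \<in> borel_measurable M" and mv: "v \<in> borel_measurable M"
  shows "lp_integral M w p (\<lambda>x. u x + v x) + lp_integral M w p (\<lambda>x. u x - v x)
       = (\<integral>\<^sup>+x. ennreal ((cmod (u x + v x) powr p + cmod (u x - v x) powr p) * w x powr p) \<partial>M)"
    and "2 * lp_integral M w p u + 2 * lp_integral M w p v
       = (\<integral>\<^sup>+x. ennreal ((2 * (cmod (u x) powr p + cmod (v x) powr p)) * w x powr p) \<partial>M)"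
proof -
  have m1: "(\<lambda>x. cmod (u x + v x) powr p * w x powr p) \<in> borel_measurable M"
   and m2: "(\<lambda>x. cmod (u x - v x) powr p * w x powr p) \<in> borel_measurable M"
    using meas_cw2[OF mu mv] by auto
  have "(\<integral>\<^sup>+x. ennreal ((cmod (u x + v x) powr p + cmod (u x - v x) powr p) * w x powr p) \<partial>M)
      = (\<integral>\<^sup>+x. ennreal (cmod (u x + v x) powr p * w x powr p + cmod (u x - v x) powr p * w x powr p) \<partial>M)"
    by (simp add: distrib_right)
  also have "\<dots> = lp_integral M w p (\<lambda>x. u x + v x) + lp_integral M w p (\<lambda>x. u x - v x)"
    unfolding I_alt by (rule nn_int_add_real[OF m1 m2]) auto
  finally show "lp_integral M w p (\<lambda>x. u x + v x) + lp_integral M w p (\<lambda>x. u x - v x)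
       = (\<integral>\<^sup>+x. ennreal ((cmod (u x + v x) powr p + cmod (u x - v x) powr p) * w x powr p) \<partial>M)" by simp
  have m3: "(\<lambda>x. cmod (u x) powr p * w x powr p) \<in> borel_measurable M" using meas_cw[OF mu] .
  have m4: "(\<lambda>x. cmod (v x) powr p * w x powr p) \<in> borel_measurable M" using meas_cw[OF mv] .
  have "(\<integral>\<^sup>+x. ennreal ((2 * (cmod (u x) powr p + cmod (v x) powr p)) * w x powr p) \<partial>M)
      = (\<integral>\<^sup>+x. ennreal (2 * (cmod (u x) powr p * w x powr p) + 2 * (cmod (v x) powr p * w x powr p)) \<partial>M)"
    by (simp add: algebra_simps)
  also have "\<dots> = (\<integral>\<^sup>+x. ennreal (2 * (cmod (u x) powr p * w x powr p)) \<partial>M) + (\<integral>\<^sup>+x. ennreal (2 * (cmod (v x) powr p * w x powr p)) \<partial>M)"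
    by (rule nn_int_add_real) (use m3 m4 in auto)
  also have "\<dots> = 2 * lp_integral M w p u + 2 * lp_integral M w p v"
    unfolding I_alt by (simp add: nn_int_2_real[OF m3] nn_int_2_real[OF m4])
  finally show "2 * lp_integral M w p u + 2 * lp_integral M w p v
       = (\<integral>\<^sup>+x. ennreal ((2 * (cmod (u x) powr p + cmod (v x) powr p)) * w x powr p) \<partial>M)" by simp
qed

end




context wlp begin

lemma lamperti_int:
  assumes u: "u \<in> Lp_w M w p" and v: "v \<in> Lp_w M w p" and p2: "p \<noteq> 2"
    and eq: "lp_integral M w p (\<lambda>x. u x + v x) + lp_integral M w p (\<lambda>x. u x - v x)
            = 2 * lp_integral M w p u + 2 * lp_integral M w p v"
  shows "AE x in M. u x * v x = 0"
proof -
  have mu: "u \<in> borel_measurable M" and mv: "v \<in> borel_measurable M"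
    using u v by (auto simp: Lp_w_def)
  define F where "F x = (cmod (u x + v x) powr p + cmod (u x - v x) powr p) * w x powr p" for x
  define G where "G x = (2 * (cmod (u x) powr p + cmod (v x) powr p)) * w x powr p" for x
  have mF: "F \<in> borel_measurable M"
  proof -
    note [measurable] = mu mv w_meas
    show ?thesis unfolding F_def by measurable
  qed
  have mG: "G \<in> borel_measurable M"
  proof -
    note [measurable] = mu mv w_meas
    show ?thesis unfolding G_def by measurable
  qed
  have intF: "(\<integral>\<^sup>+ x. ennreal (F x) \<partial>M) = lp_integral M w p (\<lambda>x. u x + v x) + lp_integral M w p (\<lambda>x. u x - v x)"
    unfolding F_def using int_split(1)[OF mu mv] by simp
  have intG: "(\<integral>\<^sup>+ x. ennreal (G x) \<partial>M) = 2 * lp_integral M w p u + 2 * lp_integral M w p v"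
    unfolding G_def using int_split(2)[OF mu mv] by simp
  have finG: "(\<integral>\<^sup>+ x. ennreal (G x) \<partial>M) < \<infinity>"
    unfolding intG using Lp_fin[OF u] Lp_fin[OF v] by (simp add: ennreal_mult_less_top)
  have p0: "p > 0" using p1 by simp
  have wp: "w x powr p > 0" for x using w_pos[of x] by simp
  have G0: "0 \<le> G x" for x unfolding G_def using wp[of x] by simp
  have F0: "0 \<le> F x" for x unfolding F_def using wp[of x] by simp
  have FG: "AE x in M. F x = G x"
  proof (cases "p > 2")
    case True
    have "G x \<le> F x" for x
    proof -
      have "2 * (cmod (u x) powr p + cmod (v x) powr p) \<le> cmod (u x + v x) powr p + cmod (u x - v x) powr p"
        using lamperti_pt[OF p0, of "u x" "v x"] True by simp
      then show ?thesis unfolding G_def F_def using wp[of x] by (intro mult_right_mono) auto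
    qed
    then show ?thesis using ae_le_eq[OF mF mG G0] intF intG eq finG by simp
  next
    case False
    have "F x \<le> G x" for x
    proof -
      have "cmod (u x + v x) powr p + cmod (u x - v x) powr p \<le> 2 * (cmod (u x) powr p + cmod (v x) powr p)"
        using lamperti_pt[OF p0, of "u x" "v x"] False by simp
      then show ?thesis unfolding G_def F_def using wp[of x] by (intro mult_right_mono) auto
    qed
    then have "AE x in M. G x = F x" using ae_le_eq[OF mG mF F0] intF intG eq finG by simp
    then show ?thesis by (rule eventually_mono) simp
  qed
  then show ?thesis
  proof (rule eventually_mono)
    fix x assume "F x = G x"
    then have e: "cmod (u x + v x) powr p + cmod (u x - v x) powr p = 2 * (cmod (u x) powr p + cmod (v x) powr p)"
      unfolding F_def G_def using wp[of x] by simp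
    have "p \<noteq> 2 \<longrightarrow> cmod (u x + v x) powr p + cmod (u x - v x) powr p = 2 * (cmod (u x) powr p + cmod (v x) powr p) \<longrightarrow> u x * v x = 0"
      using lamperti_pt[OF p0, of "u x" "v x"] by blast
    then show "u x * v x = 0" using e p2 by blast
  qed
qed

lemma lamperti_conv:
  assumes mu: "u \<in> borel_measurable M" and mv: "v \<in> borel_measurable M"
    and d: "AE x in M. u x * v x = 0"
  shows "lp_integral M w p (\<lambda>x. u x + v x) + lp_integral M w p (\<lambda>x. u x - v x)
            = 2 * lp_integral M w p u + 2 * lp_integral M w p v"
proof -
  have "(\<integral>\<^sup>+x. ennreal ((cmod (u x + v x) powr p + cmod (u x - v x) powr p) * w x powr p) \<partial>M)
      = (\<integral>\<^sup>+x. ennreal ((2 * (cmod (u x) powr p + cmod (v x) powr p)) * w x powr p) \<partial>M)"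
  proof (rule nn_integral_cong_AE)
    show "AE x in M. ennreal ((cmod (u x + v x) powr p + cmod (u x - v x) powr p) * w x powr p)
      = ennreal ((2 * (cmod (u x) powr p + cmod (v x) powr p)) * w x powr p)"
      using d by (rule eventually_mono) auto
  qed
  then show ?thesis using int_split[OF mu mv] by simp
qed

end




lemma powr_convex0:
  assumes p: "1 \<le> (p::real)" shows "convex_on {0..} (\<lambda>x. x powr p)"
proof (rule convex_on_linorderI)
  fix t x y :: real
  assume t: "t > 0" "t < 1" and xy: "x \<in> {0..}" "y \<in> {0..}" "x < y"
  show "((1 - t) *\<^sub>R x + t *\<^sub>R y) powr p \<le> (1 - t) * x powr p + t * y powr p"
  proof (cases "x = 0")
    case True
    have "t powr p \<le> t powr 1" using t p by (intro powr_mono') auto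
    then have "t powr p \<le> t" using t by simp
    then have "t powr p * y powr p \<le> t * y powr p" by (rule mult_right_mono) simp
    then show ?thesis using True t xy by (simp add: powr_mult)
  next
    case False
    then have "x > 0" "y > 0" using xy by auto
    from convex_onD[OF powr_convex[OF p], of t x y] this t show ?thesis by simp
  qed
qed (simp add: convex_real_interval)

lemma half_sum: "(\<Sum>n<N. (1/2::real)^Suc n) + (1/2)^N = 1"
  by (induction N) (auto simp: field_simps)

lemma jensen_half:
  fixes y :: "nat \<Rightarrow> real" and p :: real
  assumes p: "1 \<le> p" and y: "\<And>n. y n \<ge> 0"
  shows "(\<Sum>n<N. (1/2)^Suc n * y n) powr p \<le> (\<Sum>n<N. (1/2)^Suc n * y n powr p)"
proof -
  define b where "b n = (if n < N then (1/2::real)^Suc n else (1/2)^N)" for n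
  define z where "z n = (if n < N then y n else 0)" for n
  have atm: "{..N} = insert N {..<N}" by auto
  have sb: "(\<Sum>n\<in>{..N}. b n) = 1" unfolding atm b_def using half_sum[of N] by simp
  have "(\<Sum>n\<in>{..N}. b n *\<^sub>R z n) powr p \<le> (\<Sum>n\<in>{..N}. b n * (z n) powr p)"
    by (rule convex_on_sum[OF _ _ powr_convex0[OF p] sb]) (auto simp: b_def z_def y)
  moreover have "(\<Sum>n\<in>{..N}. b n *\<^sub>R z n) = (\<Sum>n<N. (1/2)^Suc n * y n)"
    unfolding atm by (simp add: b_def z_def)
  moreover have "(\<Sum>n\<in>{..N}. b n * (z n) powr p) = (\<Sum>n<N. (1/2)^Suc n * y n powr p)"
    unfolding atm by (simp add: b_def z_def)
  ultimately show ?thesis by simp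
qed

lemma le_one_plus_powr: "0 \<le> (t::real) \<Longrightarrow> 1 \<le> p \<Longrightarrow> t \<le> 1 + t powr p"
proof (cases "t \<le> 1")
  case False
  assume "1 \<le> p"
  then have "t powr 1 \<le> t powr p" using False by (intro powr_mono) auto
  then show ?thesis using False by simp
next
  case True
  have "0 \<le> t powr p" by simp
  then show ?thesis using True by linarith
qed




context wlp begin

lemma series_bound:
  fixes x :: "nat \<Rightarrow> 'a \<Rightarrow> real"
  assumes meas[measurable]: "\<And>n. x n \<in> borel_measurable M" and nn: "\<And>n y. x n y \<ge> 0"
    and bd: "\<And>n. (\<integral>\<^sup>+y. ennreal ((x n y * w y) powr p) \<partial>M) \<le> 1"
  shows "(\<lambda>y. complex_of_real (enn2real (\<Sum>n. ennreal ((1/2)^Suc n * x n y)))) \<in> Lp_w M w p"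
    and "\<And>n. AE y in M. (1/2)^Suc n * x n y \<le> enn2real (\<Sum>n. ennreal ((1/2)^Suc n * x n y))"
proof -
  define a where "a n = (1/2::real)^Suc n" for n
  define g where "g y = enn2real (\<Sum>n. ennreal (a n * x n y))" for y
  define R where "R y = (\<Sum>n. ennreal (a n * (x n y * w y) powr p))" for y
  have a0: "a n > 0" for n by (simp add: a_def)
  have [measurable]: "R \<in> borel_measurable M" unfolding R_def by measurable
  have [measurable]: "g \<in> borel_measurable M" unfolding g_def by measurable
  have suma: "(\<Sum>n. ennreal (a n)) = 1"
    unfolding a_def by (subst suminf_ennreal_eq[OF _ power_half_series]) auto
  have "(\<integral>\<^sup>+y. R y \<partial>M) = (\<Sum>n. \<integral>\<^sup>+y. ennreal (a n * (x n y * w y) powr p) \<partial>M)"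
    unfolding R_def by (rule nn_integral_suminf) measurable
  also have "\<dots> = (\<Sum>n. ennreal (a n) * \<integral>\<^sup>+y. ennreal ((x n y * w y) powr p) \<partial>M)"
    using a0 by (subst nn_integral_cmult[symmetric]) (auto intro!: suminf_cong nn_integral_cong simp: ennreal_mult less_imp_le)
  also have "\<dots> \<le> (\<Sum>n. ennreal (a n))"
  proof (intro suminf_le summableI)
    fix n
    have "ennreal (a n) * (\<integral>\<^sup>+y. ennreal ((x n y * w y) powr p) \<partial>M) \<le> ennreal (a n) * 1"
      by (rule mult_left_mono[OF bd]) simp
    then show "ennreal (a n) * (\<integral>\<^sup>+y. ennreal ((x n y * w y) powr p) \<partial>M) \<le> ennreal (a n)" by simp
  qed
  finally have intR: "(\<integral>\<^sup>+y. R y \<partial>M) \<le> 1" using suma by simp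
  then have "(\<integral>\<^sup>+y. R y \<partial>M) \<noteq> \<infinity>" by (auto simp: top_unique)
  then have aeR: "AE y in M. R y \<noteq> \<infinity>" by (intro nn_integral_PInf_AE) auto
  have key: "(\<forall>n. a n * x n y \<le> g y) \<and> ennreal ((g y * w y) powr p) \<le> R y" if Ry: "R y \<noteq> \<infinity>" for y
  proof -
    have wy: "w y > 0" using w_pos by simp
    have sumR: "summable (\<lambda>n. a n * (x n y * w y) powr p)"
      using Ry unfolding R_def by (intro summable_suminf_not_top) (auto simp: a0 less_imp_le)
    have Reval: "R y = ennreal (\<Sum>n. a n * (x n y * w y) powr p)"
      unfolding R_def using sumR by (intro suminf_ennreal2) (auto simp: a0 less_imp_le)
    have "ennreal (w y) * (\<Sum>n. ennreal (a n * x n y)) = (\<Sum>n. ennreal (a n * (x n y * w y)))"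
    proof -
      have "ennreal (w y) * (\<Sum>n. ennreal (a n * x n y)) = (\<Sum>n. ennreal (w y) * ennreal (a n * x n y))"
        by (rule ennreal_suminf_cmult[symmetric])
      also have "\<dots> = (\<Sum>n. ennreal (a n * (x n y * w y)))"
      proof (rule suminf_cong)
        fix n
        have "ennreal (w y) * ennreal (a n * x n y) = ennreal (w y * (a n * x n y))"
          using wy nn[of n y] a0[of n] by (simp add: ennreal_mult less_imp_le)
        then show "ennreal (w y) * ennreal (a n * x n y) = ennreal (a n * (x n y * w y))"
          by (simp add: mult_ac)
      qed
      finally show ?thesis .
    qed
    also have "\<dots> \<le> (\<Sum>n. ennreal (a n) + ennreal (a n * (x n y * w y) powr p))"
    proof (intro suminf_le summableI)
      fix n
      have "x n y * w y \<le> 1 + (x n y * w y) powr p"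
        using nn[of n y] wy p1 by (intro le_one_plus_powr) auto
      then have "a n * (x n y * w y) \<le> a n + a n * (x n y * w y) powr p"
        using mult_left_mono[OF \<open>x n y * w y \<le> 1 + (x n y * w y) powr p\<close>, of "a n"] a0[of n]
        by (simp add: distrib_left)
      then show "ennreal (a n * (x n y * w y)) \<le> ennreal (a n) + ennreal (a n * (x n y * w y) powr p)"
        using a0[of n] by (simp add: ennreal_plus[symmetric] less_imp_le del: ennreal_plus)
    qed
    also have "\<dots> = 1 + R y"
      unfolding R_def suma[symmetric] by (rule suminf_add[symmetric]) (auto intro: summableI)
    also have "\<dots> < \<infinity>" using Ry by (simp add: less_top)
    finally have "(\<Sum>n. ennreal (a n * x n y)) \<noteq> \<infinity>"
      using wy by (auto simp: ennreal_mult_less_top)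
    then have sumx: "summable (\<lambda>n. a n * x n y)"
      by (intro summable_suminf_not_top) (auto simp: a0 nn less_imp_le)
    have geval: "g y = (\<Sum>n. a n * x n y)"
      unfolding g_def using sumx
      by (subst suminf_ennreal2) (auto simp: a0 nn less_imp_le suminf_nonneg)
    have t1: "a n * x n y \<le> g y" for n
      unfolding geval using sum_le_suminf[OF sumx, of "{n}"] by (auto simp: a0 nn less_imp_le)
    have gw: "g y * w y = (\<Sum>n. a n * (x n y * w y))"
    proof -
      have "g y * w y = (\<Sum>n. a n * x n y * w y)" unfolding geval by (rule suminf_mult2[OF sumx])
      then show ?thesis by (simp add: mult.assoc)
    qed
    have sumxw: "summable (\<lambda>n. a n * (x n y * w y))"
      using summable_mult2[OF sumx, of "w y"] by (simp add: mult_ac)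
    have lim: "(\<lambda>N. (\<Sum>n<N. a n * (x n y * w y)) powr p) \<longlonglongrightarrow> (g y * w y) powr p"
      unfolding gw using p1 by (intro tendsto_powr' summable_LIMSEQ[OF sumxw] tendsto_const)
         (auto intro!: always_eventually sum_nonneg simp: a0 nn wy less_imp_le)
    have "(g y * w y) powr p \<le> (\<Sum>n. a n * (x n y * w y) powr p)"
    proof (rule LIMSEQ_le_const2[OF lim], rule exI, intro allI impI)
      fix N :: nat
      have "(\<Sum>n<N. a n * (x n y * w y)) powr p \<le> (\<Sum>n<N. a n * (x n y * w y) powr p)"
        unfolding a_def using p1 nn wy by (intro jensen_half) (auto simp: less_imp_le)
      also have "\<dots> \<le> (\<Sum>n. a n * (x n y * w y) powr p)"
        by (intro sum_le_suminf sumR) (auto simp: a0 less_imp_le)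
      finally show "(\<Sum>n<N. a n * (x n y * w y)) powr p \<le> (\<Sum>n. a n * (x n y * w y) powr p)" .
    qed
    then show ?thesis using t1 Reval by (auto intro: ennreal_leI)
  qed
  have "lp_integral M w p (\<lambda>y. complex_of_real (g y)) \<le> (\<integral>\<^sup>+y. R y \<partial>M)"
    unfolding lp_integral_def
  proof (rule nn_integral_mono_AE, use aeR in \<open>rule eventually_mono\<close>)
    fix y assume "R y \<noteq> \<infinity>"
    then show "ennreal ((cmod (complex_of_real (g y)) * w y) powr p) \<le> R y"
      using key[of y] by (simp add: g_def)
  qed
  also have "\<dots> < \<infinity>" using intR by (simp add: le_less_trans)
  finally show "(\<lambda>y. complex_of_real (enn2real (\<Sum>n. ennreal ((1/2)^Suc n * x n y)))) \<in> Lp_w M w p"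
    unfolding Lp_w_def g_def a_def by simp
  show "AE y in M. (1/2)^Suc n * x n y \<le> enn2real (\<Sum>n. ennreal ((1/2)^Suc n * x n y))" for n
    using aeR by (rule eventually_mono) (use key in \<open>auto simp: g_def a_def\<close>)
qed

end




context wlp begin

lemma J_mono: "g \<in> Lp_w M w p \<Longrightarrow> AE x in M. cmod (f x) \<le> cmod (g x) \<Longrightarrow> J f \<le> J g"
  unfolding J_def using I_mono[of f g] Lp_fin[of g]
  by (intro enn2real_mono) (auto simp: less_top)

lemma J_cong: "AE x in M. f x = g x \<Longrightarrow> J f = J g"
  unfolding J_def using I_cong by simp

lemma J_cmult: "f \<in> borel_measurable M \<Longrightarrow> J (\<lambda>x. c * f x) = cmod c powr p * J f"
  unfolding J_def by (simp add: I_cmult enn2real_mult)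

lemma J_zero: assumes "f \<in> Lp_w M w p" "J f = 0" shows "AE x in M. f x = 0"
proof -
  have [measurable]: "f \<in> borel_measurable M" using assms by (simp add: Lp_w_def)
  have "lp_integral M w p f = 0" using I_J[OF assms(1)] assms(2) by simp
  then have "AE x in M. ennreal ((cmod (f x) * w x) powr p) = 0"
    unfolding lp_integral_def by (subst (asm) nn_integral_0_iff_AE) auto
  then show ?thesis
    by (rule eventually_mono) (use w_pos in \<open>auto simp: less_le\<close>)
qed

lemma zero_Lp: "(\<lambda>x. 0) \<in> Lp_w M w p"
  by (simp add: Lp_w_def lp_integral_def)

lemma J_zero_fun: "J (\<lambda>x. 0) = 0"
  by (simp add: J_def lp_integral_def)

end

lemma pt4:
  fixes a1 a2 a3 a4 :: complex
  assumes "Im a1 = 0" "Im a2 = 0" "Im a3 = 0" "Im a4 = 0"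
  shows "cmod ((a1 - a2) + \<i> * (a3 - a4)) \<le> \<bar>Re a1 - Re a2\<bar> + \<bar>Re a3 - Re a4\<bar>"
  using cmod_le[of "(a1 - a2) + \<i> * (a3 - a4)"] assms by simp

locale pos_map = A: wlp M w p + B: wlp N v p
  for M :: "'a measure" and w and N :: "'b measure" and v and p +
  fixes S :: "('a \<Rightarrow> complex) \<Rightarrow> ('b \<Rightarrow> complex)"
  assumes into: "\<And>f. f \<in> Lp_w M w p \<Longrightarrow> S f \<in> Lp_w N v p"
    and resp: "\<And>f g. f \<in> Lp_w M w p \<Longrightarrow> g \<in> Lp_w M w p \<Longrightarrow> ae_eq M f g \<Longrightarrow> ae_eq N (S f) (S g)"
    and lin: "\<And>f g a b. f \<in> Lp_w M w p \<Longrightarrow> g \<in> Lp_w M w p \<Longrightarrow>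
        ae_eq N (S (\<lambda>x. a * f x + b * g x)) (\<lambda>y. a * S f y + b * S g y)"
    and pos: "\<And>f. f \<in> Lp_w M w p \<Longrightarrow> nonneg_ae M f \<Longrightarrow> nonneg_ae N (S f)"
    and rpos: "\<And>f. f \<in> Lp_w M w p \<Longrightarrow> nonneg_ae N (S f) \<Longrightarrow> nonneg_ae M f"
    and surj: "\<And>h. h \<in> Lp_w N v p \<Longrightarrow> \<exists>f\<in>Lp_w M w p. ae_eq N (S f) h"
begin

lemma linAE: "f \<in> Lp_w M w p \<Longrightarrow> g \<in> Lp_w M w p \<Longrightarrow>
   AE y in N. S (\<lambda>x. a * f x + b * g x) y = a * S f y + b * S g y"
  using lin[of f g a b] by (simp add: ae_eq_def)

lemma respAE: "f \<in> Lp_w M w p \<Longrightarrow> g \<in> borel_measurable M \<Longrightarrow> AE x in M. f x = g x \<Longrightarrow>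
   g \<in> Lp_w M w p \<and> (AE y in N. S f y = S g y)"
proof -
  assume f: "f \<in> Lp_w M w p" and g: "g \<in> borel_measurable M" and e: "AE x in M. f x = g x"
  have "AE x in M. g x = f x" using e by (rule eventually_mono) simp
  then have gL: "g \<in> Lp_w M w p" by (rule A.Lp_cong[OF g f])
  have "ae_eq N (S f) (S g)" by (rule resp[OF f gL]) (simp add: ae_eq_def e)
  then show ?thesis using gL by (simp add: ae_eq_def)
qed

lemma S_zero: "AE y in N. S (\<lambda>x. 0) y = 0"
  using linAE[OF A.zero_Lp A.zero_Lp, of 0 0] by simp

lemma posAE: "f \<in> Lp_w M w p \<Longrightarrow> AE x in M. Im (f x) = 0 \<and> Re (f x) \<ge> 0 \<Longrightarrow>
   AE y in N. Im (S f y) = 0 \<and> Re (S f y) \<ge> 0"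
  using pos[of f] by (simp add: nonneg_ae_def)

lemma dom:
  assumes f: "f \<in> Lp_w M w p"
  defines "V \<equiv> \<lambda>x. complex_of_real (\<bar>Re (f x)\<bar> + \<bar>Im (f x)\<bar>)"
  shows "V \<in> Lp_w M w p" "AE y in N. cmod (S f y) \<le> Re (S V y) \<and> Im (S V y) = 0"
proof -
  have [measurable]: "f \<in> borel_measurable M" using f by (simp add: Lp_w_def)
  define f1 where "f1 x = complex_of_real (max (Re (f x)) 0)" for x
  define f2 where "f2 x = complex_of_real (max (- Re (f x)) 0)" for x
  define f3 where "f3 x = complex_of_real (max (Im (f x)) 0)" for x
  define f4 where "f4 x = complex_of_real (max (- Im (f x)) 0)" for x
  have L: "f1 \<in> Lp_w M w p" "f2 \<in> Lp_w M w p" "f3 \<in> Lp_w M w p" "f4 \<in> Lp_w M w p"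
    unfolding f1_def f2_def f3_def f4_def
    by (auto intro!: A.Lp_dom[OF _ f] AE_I2 simp: abs_Re_le_cmod abs_Im_le_cmod max_def
        intro: order_trans[OF _ abs_Re_le_cmod] order_trans[OF _ abs_Im_le_cmod])
  have P11: "AE y in N. Im (S f1 y) = 0 \<and> Re (S f1 y) \<ge> 0"
    by (rule posAE[OF L(1)]) (simp add: f1_def)
  have P12: "AE y in N. Im (S f2 y) = 0 \<and> Re (S f2 y) \<ge> 0"
    by (rule posAE[OF L(2)]) (simp add: f2_def)
  have P13: "AE y in N. Im (S f3 y) = 0 \<and> Re (S f3 y) \<ge> 0"
    by (rule posAE[OF L(3)]) (simp add: f3_def)
  have P14: "AE y in N. Im (S f4 y) = 0 \<and> Re (S f4 y) \<ge> 0"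
    by (rule posAE[OF L(4)]) (simp add: f4_def)
  define P where "P x = 1 * f1 x + (-1) * f2 x" for x
  define Q where "Q x = 1 * f3 x + (-1) * f4 x" for x
  have PQ: "P \<in> Lp_w M w p" "Q \<in> Lp_w M w p"
    unfolding P_def[abs_def] Q_def[abs_def] by (rule A.Lp_lin[OF L(1) L(2)], rule A.Lp_lin[OF L(3) L(4)])
  define F' where "F' x = 1 * P x + \<i> * Q x" for x
  have F'f: "f x = F' x" for x
    unfolding F'_def P_def Q_def f1_def f2_def f3_def f4_def by (simp add: complex_eq_iff max_def)
  have "F' = f" using F'f by (intro ext) simp
  then have [measurable]: "F' \<in> borel_measurable M" by simp
  have eF: "AE y in N. S f y = S F' y" using respAE[OF f, of F'] F'f by auto
  have e3: "AE y in N. S F' y = 1 * S P y + \<i> * S Q y" unfolding F'_def[abs_def] using PQ by (rule linAE)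
  have e1: "AE y in N. S P y = 1 * S f1 y + (-1) * S f2 y" unfolding P_def[abs_def] using L by (intro linAE)
  have e2: "AE y in N. S Q y = 1 * S f3 y + (-1) * S f4 y" unfolding Q_def[abs_def] using L by (intro linAE)
  define V12 where "V12 x = 1 * f1 x + 1 * f2 x" for x
  define V34 where "V34 x = 1 * f3 x + 1 * f4 x" for x
  have V12: "V12 \<in> Lp_w M w p" "V34 \<in> Lp_w M w p"
    unfolding V12_def[abs_def] V34_def[abs_def] by (rule A.Lp_lin[OF L(1) L(2)], rule A.Lp_lin[OF L(3) L(4)])
  define VV where "VV x = 1 * V12 x + 1 * V34 x" for x
  have VVL: "VV \<in> Lp_w M w p" unfolding VV_def[abs_def] by (rule A.Lp_lin[OF V12(1) V12(2)])
  have VVV: "VV x = V x" for x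
    unfolding VV_def V12_def V34_def f1_def f2_def f3_def f4_def V_def by (simp add: complex_eq_iff max_def)
  have [measurable]: "V \<in> borel_measurable M" unfolding V_def by measurable
  have VL: "V \<in> Lp_w M w p" and eV: "AE y in N. S VV y = S V y"
    using respAE[OF VVL, of V] VVV by auto
  show "V \<in> Lp_w M w p" by (rule VL)
  have e4: "AE y in N. S VV y = 1 * S V12 y + 1 * S V34 y" unfolding VV_def[abs_def] using V12 by (rule linAE)
  have e5: "AE y in N. S V12 y = 1 * S f1 y + 1 * S f2 y" unfolding V12_def[abs_def] using L by (intro linAE)
  have e6: "AE y in N. S V34 y = 1 * S f3 y + 1 * S f4 y" unfolding V34_def[abs_def] using L by (intro linAE)
  show "AE y in N. cmod (S f y) \<le> Re (S V y) \<and> Im (S V y) = 0"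
    using eF e1 e2 e3 e4 e5 e6 eV P11 P12 P13 P14
  proof eventually_elim
    case (elim y)
    then show ?case using pt4[of "S f1 y" "S f2 y" "S f3 y" "S f4 y"] by auto
  qed
qed

end




context pos_map begin

lemma bound_nonneg: "\<exists>C. \<forall>g\<in>Lp_w M w p. nonneg_ae M g \<longrightarrow> B.J (S g) \<le> C * A.J g"
proof (rule ccontr)
  assume "\<not> ?thesis"
  then have "\<forall>C. \<exists>g\<in>Lp_w M w p. nonneg_ae M g \<and> B.J (S g) > C * A.J g"
    by (auto simp: not_le)
  define a where "a n = (1/2::real)^Suc n" for n
  define c where "c n = real n / (a n powr p)" for n
  have a0: "a n > 0" for n by (simp add: a_def)
  have p0: "p > 0" using A.p1 by simp
  have "\<forall>n. \<exists>g. g\<in>Lp_w M w p \<and> nonneg_ae M g \<and> B.J (S g) > c n * A.J g"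
  proof
    fix n
    from \<open>\<forall>C. _\<close>[rule_format, of "c n"] show "\<exists>g. g\<in>Lp_w M w p \<and> nonneg_ae M g \<and> B.J (S g) > c n * A.J g"
      by blast
  qed
  from choice[OF this] obtain gs where gsall: "\<forall>n. gs n\<in>Lp_w M w p \<and> nonneg_ae M (gs n) \<and> B.J (S (gs n)) > c n * A.J (gs n)"
    by blast
  have gs: "\<And>n. gs n \<in> Lp_w M w p" "\<And>n. nonneg_ae M (gs n)"
     "\<And>n. B.J (S (gs n)) > c n * A.J (gs n)" using gsall by auto
  have [measurable]: "gs n \<in> borel_measurable M" for n using gs(1) by (simp add: Lp_w_def)
  have Jpos: "A.J (gs n) > 0" for n
  proof (rule ccontr)
    assume "\<not> A.J (gs n) > 0"
    then have J0: "A.J (gs n) = 0" using A.J_nonneg[of "gs n"] by simp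
    then have "AE x in M. gs n x = 0" by (rule A.J_zero[OF gs(1)])
    then have "AE y in N. S (gs n) y = S (\<lambda>x. 0) y" using respAE[OF gs(1), of "\<lambda>x. 0"] by auto
    with S_zero have "AE y in N. S (gs n) y = 0" by eventually_elim simp
    then have "B.J (S (gs n)) = 0" using B.J_cong[of "S (gs n)" "\<lambda>x. 0"] B.J_zero_fun by simp
    then show False using gs(3)[of n] J0 by simp
  qed
  define k where "k n = A.J (gs n) powr (-1/p)" for n
  have k0: "k n > 0" for n using Jpos[of n] by (simp add: k_def)
  have kJ: "k n powr p * A.J (gs n) = 1" for n
  proof -
    have "k n powr p = A.J (gs n) powr ((-1/p) * p)" unfolding k_def by (rule powr_powr)
    also have "(-1/p) * p = -1" using p0 by simp
    also have "A.J (gs n) powr (-1) = inverse (A.J (gs n))"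
      using Jpos[of n] by (simp add: powr_minus)
    finally show ?thesis using Jpos[of n] by simp
  qed
  define x where "x n y = k n * cmod (gs n y)" for n y
  have [measurable]: "x n \<in> borel_measurable M" for n unfolding x_def by measurable
  have bdx: "(\<integral>\<^sup>+y. ennreal ((x n y * w y) powr p) \<partial>M) \<le> 1" for n
  proof -
    have "(\<integral>\<^sup>+y. ennreal ((x n y * w y) powr p) \<partial>M) = lp_integral M w p (\<lambda>y. complex_of_real (k n) * gs n y)"
      unfolding lp_integral_def x_def using k0[of n] by (simp add: norm_mult)
    also have "\<dots> = ennreal (k n powr p) * ennreal (A.J (gs n))"
      using k0[of n] by (simp add: A.I_cmult A.I_J[OF gs(1)])
    also have "\<dots> = ennreal (k n powr p * A.J (gs n))"
      by (rule ennreal_mult[symmetric]) (auto simp: A.J_nonneg)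
    finally show ?thesis using kJ by simp
  qed
  define G where "G y = complex_of_real (enn2real (\<Sum>n. ennreal ((1/2)^Suc n * x n y)))" for y
  have xnn: "\<And>n y. x n y \<ge> 0" using k0 by (simp add: x_def less_imp_le)
  have xm: "\<And>n. x n \<in> borel_measurable M" by simp
  note sb = A.series_bound[of x, OF xm xnn bdx]
  have GL: "G \<in> Lp_w M w p" unfolding G_def[abs_def] by (rule sb(1))
  have Gge: "AE y in M. a n * x n y \<le> Re (G y)" for n
    using sb(2)[of n] by (rule eventually_mono) (simp add: G_def a_def)
  have SGL: "S G \<in> Lp_w N v p" using into[OF GL] .
  have big: "B.J (S G) > real n" for n
  proof -
    define D where "D y = 1 * G y + complex_of_real (- (a n * k n)) * gs n y" for y
    have DL: "D \<in> Lp_w M w p" unfolding D_def using GL gs(1) by (rule A.Lp_lin)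
    have gnn: "AE y in M. Im (gs n y) = 0 \<and> Re (gs n y) \<ge> 0" using gs(2)[of n] by (simp add: nonneg_ae_def)
    have "AE y in M. Im (D y) = 0 \<and> Re (D y) \<ge> 0"
      using gnn Gge[of n]
    proof eventually_elim
      case (elim y)
      then have "cmod (gs n y) = Re (gs n y)" by (simp add: cmod_eq_Re)
      then show ?case using elim by (simp add: D_def G_def x_def)
    qed
    then have SD: "AE y in N. Im (S D y) = 0 \<and> Re (S D y) \<ge> 0" by (rule posAE[OF DL])
    have eD: "AE y in N. S D y = 1 * S G y + complex_of_real (- (a n * k n)) * S (gs n) y"
      unfolding D_def[abs_def] using GL gs(1) by (rule linAE)
    have Sg: "AE y in N. Im (S (gs n) y) = 0 \<and> Re (S (gs n) y) \<ge> 0" using posAE[OF gs(1)] gnn by simp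
    have "AE y in N. cmod (complex_of_real (a n * k n) * S (gs n) y) \<le> cmod (S G y)"
      using SD eD Sg
    proof eventually_elim
      case (elim y)
      define cc where "cc = a n * k n"
      define d where "d = Re (S D y)"
      define e where "e = Re (S (gs n) y)"
      have cc0: "0 \<le> cc" using a0[of n] k0[of n] by (simp add: cc_def)
      have d0: "0 \<le> d" and e0: "0 \<le> e" using elim(1,3) by (auto simp: d_def e_def)
      have SDr: "S D y = complex_of_real d" using elim(1) by (simp add: complex_eq_iff d_def)
      have Sgr: "S (gs n) y = complex_of_real e" using elim(3) by (simp add: complex_eq_iff e_def)
      have "S G y = S D y + complex_of_real cc * S (gs n) y" using elim(2) by (simp add: cc_def)
      also have "\<dots> = complex_of_real (d + cc * e)" by (simp add: SDr Sgr)
      finally have SGr: "S G y = complex_of_real (d + cc * e)" .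
      have "cmod (S G y) = \<bar>d + cc * e\<bar>" unfolding SGr by (rule norm_of_real)
      then have "cmod (S G y) = d + cc * e" using d0 e0 cc0 by simp
      moreover have "cmod (complex_of_real cc * S (gs n) y) = cc * e" using cc0 e0 by (simp add: Sgr norm_mult)
      ultimately show ?case using d0 by (simp add: cc_def)
    qed
    then have "B.J (\<lambda>y. complex_of_real (a n * k n) * S (gs n) y) \<le> B.J (S G)"
      by (rule B.J_mono[OF SGL])
    moreover have "B.J (\<lambda>y. complex_of_real (a n * k n) * S (gs n) y) = (a n * k n) powr p * B.J (S (gs n))"
    proof -
      have m: "S (gs n) \<in> borel_measurable N" using into[OF gs(1)] by (simp add: Lp_w_def)
      have ak: "cmod (complex_of_real (a n * k n)) = a n * k n"
        unfolding norm_of_real using a0[of n] k0[of n] by simp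
      show ?thesis unfolding B.J_cmult[OF m] ak ..
    qed
    moreover have "(a n * k n) powr p * B.J (S (gs n)) > (a n * k n) powr p * (c n * A.J (gs n))"
      by (rule mult_strict_left_mono[OF gs(3)[of n]]) (use a0[of n] k0[of n] in simp)
    moreover have "(a n * k n) powr p * (c n * A.J (gs n)) = real n"
    proof -
      have "(a n * k n) powr p * (c n * A.J (gs n)) = (a n powr p * c n) * (k n powr p * A.J (gs n))"
        using a0[of n] k0[of n] by (simp add: powr_mult)
      also have "\<dots> = real n" using kJ[of n] a0[of n] by (simp add: c_def)
      finally show ?thesis .
    qed
    ultimately show ?thesis by linarith
  qed
  obtain n :: nat where "B.J (S G) < real n" using reals_Archimedean2 by blast
  with big[of n] show False by simp
qed

lemma bounded: "\<exists>C. \<forall>f\<in>Lp_w M w p. lp_norm N v p (S f) \<le> C * lp_norm M w p f"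
proof -
  obtain C0 where C0: "\<forall>g\<in>Lp_w M w p. nonneg_ae M g \<longrightarrow> B.J (S g) \<le> C0 * A.J g"
    using bound_nonneg by blast
  define C where "C = max C0 0"
  have C: "\<forall>g\<in>Lp_w M w p. nonneg_ae M g \<longrightarrow> B.J (S g) \<le> C * A.J g" "C \<ge> 0"
  proof -
    have "B.J (S g) \<le> C * A.J g" if "g \<in> Lp_w M w p" "nonneg_ae M g" for g
    proof -
      have "C0 * A.J g \<le> C * A.J g" unfolding C_def by (rule mult_right_mono) (auto simp: A.J_nonneg)
      then show ?thesis using C0 that by fastforce
    qed
    then show "\<forall>g\<in>Lp_w M w p. nonneg_ae M g \<longrightarrow> B.J (S g) \<le> C * A.J g" by blast
    show "C \<ge> 0" by (simp add: C_def)
  qed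
  have p0: "p > 0" using A.p1 by simp
  have "lp_norm N v p (S f) \<le> (C * 2 powr p) powr (1/p) * lp_norm M w p f" if f: "f \<in> Lp_w M w p" for f
  proof -
    have [measurable]: "f \<in> borel_measurable M" using f by (simp add: Lp_w_def)
    define V where "V = (\<lambda>x. complex_of_real (\<bar>Re (f x)\<bar> + \<bar>Im (f x)\<bar>))"
    have VL: "V \<in> Lp_w M w p" and dV: "AE y in N. cmod (S f y) \<le> Re (S V y) \<and> Im (S V y) = 0"
      using dom[OF f] by (simp_all add: V_def)
    have Vnn: "nonneg_ae M V" by (simp add: nonneg_ae_def V_def)
    have "B.J (S f) \<le> B.J (S V)"
    proof (rule B.J_mono[OF into[OF VL]], rule eventually_mono[OF dV])
      fix y assume h: "cmod (S f y) \<le> Re (S V y) \<and> Im (S V y) = 0"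
      then show "cmod (S f y) \<le> cmod (S V y)" using abs_ge_self[of "Re (S V y)"] by (simp add: cmod_eq_Re)
    qed
    also have "\<dots> \<le> C * A.J V" using C VL Vnn by auto
    also have "A.J V \<le> A.J (\<lambda>x. 2 * f x)"
    proof (rule A.J_mono)
      show "(\<lambda>x. 2 * f x) \<in> Lp_w M w p" using A.Lp_lin[OF f f, of 2 0] by simp
      show "AE x in M. cmod (V x) \<le> cmod (2 * f x)"
      proof (rule AE_I2)
        fix x
        have "cmod (V x) = \<bar>\<bar>Re (f x)\<bar> + \<bar>Im (f x)\<bar>\<bar>" unfolding V_def by (rule norm_of_real)
        also have "\<dots> = \<bar>Re (f x)\<bar> + \<bar>Im (f x)\<bar>" by simp
        also have "\<dots> \<le> 2 * cmod (f x)" using abs_Re_le_cmod[of "f x"] abs_Im_le_cmod[of "f x"] by simp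
        finally show "cmod (V x) \<le> cmod (2 * f x)" by (simp add: norm_mult)
      qed
    qed
    also have "A.J (\<lambda>x. 2 * f x) = 2 powr p * A.J f" by (subst A.J_cmult) auto
    finally have "B.J (S f) \<le> C * (2 powr p * A.J f)" using C(2) by (simp add: mult_left_mono)
    then have "B.J (S f) powr (1/p) \<le> (C * 2 powr p * A.J f) powr (1/p)"
      using p0 B.J_nonneg by (intro powr_mono2) (auto simp: mult_ac)
    also have "\<dots> = (C * 2 powr p) powr (1/p) * A.J f powr (1/p)"
      using C(2) A.J_nonneg by (simp add: powr_mult)
    finally show ?thesis by (simp add: A.norm_J B.norm_J)
  qed
  then show ?thesis by blast
qed

lemma separating:
  assumes f: "f \<in> Lp_w M w p" and g: "g \<in> Lp_w M w p" and d: "disjoint_ae M f g"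
  shows "disjoint_ae N (S f) (S g)"
proof -
  define Vf where "Vf = (\<lambda>x. complex_of_real (\<bar>Re (f x)\<bar> + \<bar>Im (f x)\<bar>))"
  define Vg where "Vg = (\<lambda>x. complex_of_real (\<bar>Re (g x)\<bar> + \<bar>Im (g x)\<bar>))"
  have VfL: "Vf \<in> Lp_w M w p" and dVf: "AE y in N. cmod (S f y) \<le> Re (S Vf y) \<and> Im (S Vf y) = 0"
    using dom[OF f] by (simp_all add: Vf_def)
  have VgL: "Vg \<in> Lp_w M w p" and dVg: "AE y in N. cmod (S g y) \<le> Re (S Vg y) \<and> Im (S Vg y) = 0"
    using dom[OF g] by (simp_all add: Vg_def)
  have [measurable]: "S Vf \<in> borel_measurable N" "S Vg \<in> borel_measurable N"
    using into[OF VfL] into[OF VgL] by (auto simp: Lp_w_def)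
  define u where "u y = complex_of_real (max 0 (min (Re (S Vf y)) (Re (S Vg y))))" for y
  have [measurable]: "u \<in> borel_measurable N" unfolding u_def by measurable
  have uL: "u \<in> Lp_w N v p"
    by (rule B.Lp_dom[OF _ into[OF VfL]]) (auto intro!: AE_I2 simp: u_def intro: order_trans[OF _ abs_Re_le_cmod])
  obtain z where zL: "z \<in> Lp_w M w p" and Sz: "AE y in N. S z y = u y"
    using surj[OF uL] by (auto simp: ae_eq_def)
  have "nonneg_ae N (S z)" using Sz by (auto simp: nonneg_ae_def u_def elim!: eventually_mono)
  then have zn: "AE x in M. Im (z x) = 0 \<and> Re (z x) \<ge> 0" using rpos[OF zL] by (simp add: nonneg_ae_def)
  have below: "AE x in M. Re (z x) \<le> Re (V x)" if VL: "V \<in> Lp_w M w p"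
     and VS: "AE y in N. Re (u y) \<le> Re (S V y) \<and> Im (S V y) = 0"
     and Vr: "\<And>x. Im (V x) = 0" for V
  proof -
    define D where "D x = 1 * V x + (-1) * z x" for x
    have DL: "D \<in> Lp_w M w p" unfolding D_def using VL zL by (rule A.Lp_lin)
    have eD: "AE y in N. S D y = 1 * S V y + (-1) * S z y" unfolding D_def[abs_def] using VL zL by (rule linAE)
    have "nonneg_ae N (S D)" unfolding nonneg_ae_def using eD Sz VS
      by eventually_elim (auto simp: u_def)
    then have "nonneg_ae M D" by (rule rpos[OF DL])
    then show ?thesis unfolding nonneg_ae_def by (rule eventually_mono) (simp add: D_def)
  qed
  have VSf: "AE y in N. Re (u y) \<le> Re (S Vf y) \<and> Im (S Vf y) = 0"
  proof (rule eventually_mono[OF dVf])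
    fix y assume h: "cmod (S f y) \<le> Re (S Vf y) \<and> Im (S Vf y) = 0"
    have "0 \<le> Re (S Vf y)" using h norm_ge_zero[of "S f y"] by linarith
    then show "Re (u y) \<le> Re (S Vf y) \<and> Im (S Vf y) = 0" using h by (simp add: u_def)
  qed
  have VSg: "AE y in N. Re (u y) \<le> Re (S Vg y) \<and> Im (S Vg y) = 0"
  proof (rule eventually_mono[OF dVg])
    fix y assume h: "cmod (S g y) \<le> Re (S Vg y) \<and> Im (S Vg y) = 0"
    have "0 \<le> Re (S Vg y)" using h norm_ge_zero[of "S g y"] by linarith
    then show "Re (u y) \<le> Re (S Vg y) \<and> Im (S Vg y) = 0" using h by (simp add: u_def)
  qed
  have zf: "AE x in M. Re (z x) \<le> Re (Vf x)"
    by (rule below[OF VfL VSf]) (simp add: Vf_def)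
  have zg: "AE x in M. Re (z x) \<le> Re (Vg x)"
    by (rule below[OF VgL VSg]) (simp add: Vg_def)
  have "AE x in M. z x = 0" using zf zg zn d unfolding disjoint_ae_def
  proof eventually_elim
    case (elim x)
    then have "f x = 0 \<or> g x = 0" by simp
    then have "Re (Vf x) = 0 \<or> Re (Vg x) = 0" by (auto simp: Vf_def Vg_def)
    then show ?case using elim by (auto simp: complex_eq_iff)
  qed
  then have "AE y in N. S z y = S (\<lambda>x. 0) y" using respAE[OF zL, of "\<lambda>x. 0"] by auto
  then show ?thesis unfolding disjoint_ae_def using S_zero Sz dVf dVg
  proof eventually_elim
    case (elim y)
    then have "min (Re (S Vf y)) (Re (S Vg y)) \<le> 0" by (simp add: u_def complex_eq_iff)
    then have "Re (S Vf y) \<le> 0 \<or> Re (S Vg y) \<le> 0" by linarith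
    then show ?case
    proof
      assume "Re (S Vf y) \<le> 0"
      then have "cmod (S f y) \<le> 0" using elim(4) by linarith
      then show "S f y * S g y = 0" by simp
    next
      assume "Re (S Vg y) \<le> 0"
      then have "cmod (S g y) \<le> 0" using elim(5) by linarith
      then show "S f y * S g y = 0" by simp
    qed
  qed
qed

end




lemma wlp_of:
  assumes "weighted_lc_group gm e gi mu w" "1 \<le> p"
  shows "wlp mu w p"
proof -
  have lc: "sets mu = sets borel" and wt: "weight gm e w"
    using assms(1) by (auto simp: weighted_lc_group_def lc_group_def)
  have "w \<in> borel_measurable borel" using wt
    by (intro borel_measurable_continuous_onI) (simp add: weight_def)
  moreover have "measurable mu borel = measurable borel (borel :: real measure)"
    by (rule measurable_cong_sets[OF lc]) simp
  ultimately have "w \<in> borel_measurable mu" by simp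
  then show ?thesis using wt assms(2) by unfold_locales (auto simp: weight_def)
qed

context wlp begin
lemma norm_cong: "AE x in M. f x = g x \<Longrightarrow> lp_norm M w p f = lp_norm M w p g"
  by (simp add: lp_norm_def I_cong)
end

theorem proposition2p6:
  fixes multG :: "'g::t2_space \<Rightarrow> 'g \<Rightarrow> 'g" and eG :: 'g and invG :: "'g \<Rightarrow> 'g"
    and muG :: "'g measure" and w1 :: "'g \<Rightarrow> real"
    and multH :: "'h::t2_space \<Rightarrow> 'h \<Rightarrow> 'h" and eH :: 'h and invH :: "'h \<Rightarrow> 'h"
    and muH :: "'h measure" and w2 :: "'h \<Rightarrow> real"
    and p :: real
    and T :: "('g \<Rightarrow> complex) \<Rightarrow> ('h \<Rightarrow> complex)"
  assumes "weighted_lc_group multG eG invG muG w1"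
    and "weighted_lc_group multH eH invH muH w2"
    and "1 \<le> p"
    and "conv_banach_algebra multG invG muG w1 p"
    and "conv_banach_algebra multH invH muH w2 p"
    and "algebra_iso multG invG muG w1 multH invH muH w2 p T"
    and "bipositive muG w1 muH w2 p T \<or> (isometry_lp muG w1 muH w2 p T \<and> p \<noteq> 2)"
  shows "bicontinuous muG w1 muH w2 p T \<and> biseparating muG w1 muH w2 p T"
proof -
  interpret G: wlp muG w1 p using wlp_of[OF assms(1,3)] .
  interpret H: wlp muH w2 p using wlp_of[OF assms(2,3)] .
  have into: "\<And>f. f \<in> Lp_w muG w1 p \<Longrightarrow> T f \<in> Lp_w muH w2 p"
    and resp: "\<And>f g. f \<in> Lp_w muG w1 p \<Longrightarrow> g \<in> Lp_w muG w1 p \<Longrightarrow> ae_eq muG f g \<Longrightarrow> ae_eq muH (T f) (T g)"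
    and lin: "\<And>f g a b. f \<in> Lp_w muG w1 p \<Longrightarrow> g \<in> Lp_w muG w1 p \<Longrightarrow>
        ae_eq muH (T (\<lambda>x. a * f x + b * g x)) (\<lambda>y. a * T f y + b * T g y)"
    and inj: "\<And>f g. f \<in> Lp_w muG w1 p \<Longrightarrow> g \<in> Lp_w muG w1 p \<Longrightarrow> ae_eq muH (T f) (T g) \<Longrightarrow> ae_eq muG f g"
    and surj: "\<And>h. h \<in> Lp_w muH w2 p \<Longrightarrow> \<exists>f\<in>Lp_w muG w1 p. ae_eq muH (T f) h"
    using assms(6) unfolding algebra_iso_def by blast+
  show ?thesis
  proof (cases "bipositive muG w1 muH w2 p T")
    case True
    then have posT: "\<And>f. f \<in> Lp_w muG w1 p \<Longrightarrow> nonneg_ae muG f \<Longrightarrow> nonneg_ae muH (T f)"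
      and rposT: "\<And>f. f \<in> Lp_w muG w1 p \<Longrightarrow> nonneg_ae muH (T f) \<Longrightarrow> nonneg_ae muG f"
      unfolding bipositive_def by blast+
    interpret PT: pos_map muG w1 muH w2 p T
      by unfold_locales (use into resp lin posT rposT surj in auto)
    define Ti where "Ti h = (SOME f. f \<in> Lp_w muG w1 p \<and> ae_eq muH (T f) h)" for h
    have Ti: "Ti h \<in> Lp_w muG w1 p \<and> ae_eq muH (T (Ti h)) h" if "h \<in> Lp_w muH w2 p" for h
    proof -
      have ex: "\<exists>f. f \<in> Lp_w muG w1 p \<and> ae_eq muH (T f) h" using surj[OF that] by blast
      show ?thesis unfolding Ti_def by (rule someI_ex[OF ex])
    qed
    have TiL: "Ti h \<in> Lp_w muG w1 p" and TiE: "ae_eq muH (T (Ti h)) h" if "h \<in> Lp_w muH w2 p" for h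
      using Ti[OF that] by auto
    have TiT: "ae_eq muG (Ti (T f)) f" if "f \<in> Lp_w muG w1 p" for f
      using Ti[OF into[OF that]] that by (intro inj) auto
    interpret PI: pos_map muH w2 muG w1 p Ti
    proof unfold_locales
      show "Ti h \<in> Lp_w muG w1 p" if "h \<in> Lp_w muH w2 p" for h using Ti[OF that] by simp
      show "ae_eq muG (Ti h1) (Ti h2)" if h: "h1 \<in> Lp_w muH w2 p" "h2 \<in> Lp_w muH w2 p" "ae_eq muH h1 h2" for h1 h2
      proof (rule inj)
        show "ae_eq muH (T (Ti h1)) (T (Ti h2))"
          using TiE[OF h(1)] TiE[OF h(2)] h(3) unfolding ae_eq_def by eventually_elim simp
      qed (use Ti h in auto)
      show "ae_eq muG (Ti (\<lambda>x. a * h1 x + b * h2 x)) (\<lambda>y. a * Ti h1 y + b * Ti h2 y)"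
        if h: "h1 \<in> Lp_w muH w2 p" "h2 \<in> Lp_w muH w2 p" for h1 h2 a b
      proof (rule inj)
        have hl: "(\<lambda>x. a * h1 x + b * h2 x) \<in> Lp_w muH w2 p" using h by (rule H.Lp_lin)
        show "(\<lambda>y. a * Ti h1 y + b * Ti h2 y) \<in> Lp_w muG w1 p" using Ti[OF h(1)] Ti[OF h(2)] by (intro G.Lp_lin) auto
        show "Ti (\<lambda>x. a * h1 x + b * h2 x) \<in> Lp_w muG w1 p" using Ti[OF hl] by simp
        show "ae_eq muH (T (Ti (\<lambda>x. a * h1 x + b * h2 x))) (T (\<lambda>y. a * Ti h1 y + b * Ti h2 y))"
          using TiE[OF hl] TiE[OF h(1)] TiE[OF h(2)] lin[OF TiL[OF h(1)] TiL[OF h(2)], of a b] unfolding ae_eq_def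
          by eventually_elim simp
      qed
      show "nonneg_ae muG (Ti h)" if h: "h \<in> Lp_w muH w2 p" "nonneg_ae muH h" for h
      proof (rule rposT)
        show "nonneg_ae muH (T (Ti h))" using TiE[OF h(1)] h(2) unfolding ae_eq_def nonneg_ae_def
          by eventually_elim simp
      qed (use Ti h in auto)
      show "nonneg_ae muH h" if h: "h \<in> Lp_w muH w2 p" "nonneg_ae muG (Ti h)" for h
      proof -
        have "nonneg_ae muH (T (Ti h))" using posT[OF TiL[OF h(1)] h(2)] .
        then show ?thesis using TiE[OF h(1)] unfolding ae_eq_def nonneg_ae_def
          by eventually_elim simp
      qed
      show "\<exists>h\<in>Lp_w muH w2 p. ae_eq muG (Ti h) f" if "f \<in> Lp_w muG w1 p" for f
        using TiT[OF that] into[OF that] by blast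
    qed
    have bc1: "\<exists>C. \<forall>f\<in>Lp_w muG w1 p. lp_norm muH w2 p (T f) \<le> C * lp_norm muG w1 p f"
      by (rule PT.bounded)
    obtain C where C: "\<forall>h\<in>Lp_w muH w2 p. lp_norm muG w1 p (Ti h) \<le> C * lp_norm muH w2 p h"
      using PI.bounded by blast
    have "lp_norm muG w1 p f \<le> C * lp_norm muH w2 p (T f)" if f: "f \<in> Lp_w muG w1 p" for f
    proof -
      have "lp_norm muG w1 p f = lp_norm muG w1 p (Ti (T f))"
        using TiT[OF f] by (intro G.norm_cong) (auto simp: ae_eq_def elim: eventually_mono)
      then show ?thesis using C into[OF f] by auto
    qed
    then have bc: "bicontinuous muG w1 muH w2 p T" unfolding bicontinuous_def using bc1 by blast
    have bs: "disjoint_ae muG f g" if fg: "f \<in> Lp_w muG w1 p" "g \<in> Lp_w muG w1 p"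
      "disjoint_ae muH (T f) (T g)" for f g
    proof -
      have "disjoint_ae muG (Ti (T f)) (Ti (T g))" using PI.separating into fg by auto
      then show ?thesis using TiT[OF fg(1)] TiT[OF fg(2)] unfolding disjoint_ae_def ae_eq_def
        by eventually_elim simp
    qed
    show ?thesis using bc bs PT.separating unfolding biseparating_def by blast
  next
    case False
    then have iso: "\<And>f. f \<in> Lp_w muG w1 p \<Longrightarrow> lp_norm muH w2 p (T f) = lp_norm muG w1 p f" and p2: "p \<noteq> 2"
      using assms(7) unfolding isometry_lp_def by auto
    have p0: "p > 0" using assms(3) by simp
    have isoI: "lp_integral muH w2 p (T f) = lp_integral muG w1 p f" if f: "f \<in> Lp_w muG w1 p" for f
    proof -
      have "H.J (T f) powr (1/p) = G.J f powr (1/p)" using iso[OF f] by (simp add: G.norm_J H.norm_J)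
      then have "(H.J (T f) powr (1/p)) powr p = (G.J f powr (1/p)) powr p" by simp
      then have "H.J (T f) = G.J f" using p0 G.J_nonneg H.J_nonneg by (simp add: powr_powr)
      then show ?thesis using G.I_J[OF f] H.I_J[OF into[OF f]] by simp
    qed
    have bc: "bicontinuous muG w1 muH w2 p T" unfolding bicontinuous_def using iso
      by (intro conjI exI[of _ 1]) auto
    have trans: "lp_integral muH w2 p (\<lambda>x. T f x + T g x) + lp_integral muH w2 p (\<lambda>x. T f x - T g x)
        = lp_integral muG w1 p (\<lambda>x. f x + g x) + lp_integral muG w1 p (\<lambda>x. f x - g x)"
      if fg: "f \<in> Lp_w muG w1 p" "g \<in> Lp_w muG w1 p" for f g
    proof -
      have L1: "(\<lambda>x. 1 * f x + 1 * g x) \<in> Lp_w muG w1 p" and L2: "(\<lambda>x. 1 * f x + (-1) * g x) \<in> Lp_w muG w1 p"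
        by (rule G.Lp_lin[OF fg], rule G.Lp_lin[OF fg])
      have "lp_integral muH w2 p (\<lambda>x. T f x + T g x) = lp_integral muH w2 p (T (\<lambda>x. 1 * f x + 1 * g x))"
        using lin[OF fg, of 1 1] by (intro H.I_cong) (auto simp: ae_eq_def elim: eventually_mono)
      also have "\<dots> = lp_integral muG w1 p (\<lambda>x. f x + g x)" using isoI[OF L1] by simp
      finally have 1: "lp_integral muH w2 p (\<lambda>x. T f x + T g x) = lp_integral muG w1 p (\<lambda>x. f x + g x)" .
      have "lp_integral muH w2 p (\<lambda>x. T f x - T g x) = lp_integral muH w2 p (T (\<lambda>x. 1 * f x + (-1) * g x))"
        using lin[OF fg, of 1 "-1"] by (intro H.I_cong) (auto simp: ae_eq_def elim: eventually_mono)
      also have "\<dots> = lp_integral muG w1 p (\<lambda>x. f x - g x)" using isoI[OF L2] by simp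
      finally show ?thesis using 1 by simp
    qed
    have "biseparating muG w1 muH w2 p T" unfolding biseparating_def
    proof (intro conjI ballI impI)
      fix f g assume fg: "f \<in> Lp_w muG w1 p" "g \<in> Lp_w muG w1 p" and d: "disjoint_ae muG f g"
      have mf: "f \<in> borel_measurable muG" "g \<in> borel_measurable muG" using fg by (auto simp: Lp_w_def)
      have "lp_integral muG w1 p (\<lambda>x. f x + g x) + lp_integral muG w1 p (\<lambda>x. f x - g x)
            = 2 * lp_integral muG w1 p f + 2 * lp_integral muG w1 p g"
        using G.lamperti_conv[OF mf] d by (simp add: disjoint_ae_def)
      then have "lp_integral muH w2 p (\<lambda>x. T f x + T g x) + lp_integral muH w2 p (\<lambda>x. T f x - T g x)
            = 2 * lp_integral muH w2 p (T f) + 2 * lp_integral muH w2 p (T g)"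
        using trans[OF fg] isoI fg by simp
      then show "disjoint_ae muH (T f) (T g)"
        using H.lamperti_int[OF into[OF fg(1)] into[OF fg(2)] p2] by (simp add: disjoint_ae_def)
    next
      fix f g assume fg: "f \<in> Lp_w muG w1 p" "g \<in> Lp_w muG w1 p" and d: "disjoint_ae muH (T f) (T g)"
      have mf: "T f \<in> borel_measurable muH" "T g \<in> borel_measurable muH"
        using into[OF fg(1)] into[OF fg(2)] by (auto simp: Lp_w_def)
      have "lp_integral muH w2 p (\<lambda>x. T f x + T g x) + lp_integral muH w2 p (\<lambda>x. T f x - T g x)
            = 2 * lp_integral muH w2 p (T f) + 2 * lp_integral muH w2 p (T g)"
        using H.lamperti_conv[OF mf] d by (simp add: disjoint_ae_def)
      then have "lp_integral muG w1 p (\<lambda>x. f x + g x) + lp_integral muG w1 p (\<lambda>x. f x - g x)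
            = 2 * lp_integral muG w1 p f + 2 * lp_integral muG w1 p g"
        using trans[OF fg] isoI fg by simp
      then show "disjoint_ae muG f g"
        using G.lamperti_int[OF fg p2] by (simp add: disjoint_ae_def)
    qed
    with bc show ?thesis by simp
  qed
qed


end
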